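(* Let $n\ge 1$ be an integer and let $U_{6n}=\langle a,b : a^{2n}=b^3=1,\ a^{-1}ba=b^{-1}\rangle$ (a group of order $6n$). Let $\Gamma_{U_{6n}}$ be its non-commuting graph. Then the spectrum of the distance signless Laplacian matrix $D^Q(\Gamma_{U_{6n}})$ (eigenvalues counted with multiplicity, multiplicities being added if two of the listed values coincide) consists of: (a) $6n-4$ with multiplicity $3(n-1)$; (b) $7n-4$ with multiplicity $2n+1$; (c) $8n-4$ with multiplicity $1$; (d) $13n-4$ with multiplicity $1$.
   Context: For a finite non-abelian group $G$ with centre $Z(G)$, the non-commuting graph $\Gamma_G$ is the simple undirected graph with vertex set $G\setminus Z(G)$, in which two distinct vertices $u,v$ are adjacent if and only if $uv\ne vu$. For a connected graph $H$, $d_{uv}$ denotes the length of a shortest path between $u$ and $v$; the distance matrix $D(H)$ has $(u,v)$-entry $d_{uv}$. The transmission of a vertex $v$ is $\sum_{u} d_{uv}$, and $Tr(H)$ is the diagonal matrix of vertex transmissions. The distance signless Laplacian matrix is $D^Q(H)=Tr(H)+D(H)$. *)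

theory Defs
  imports "HOL-Algebra.Group" "Jordan_Normal_Form.Char_Poly" "HOL-Library.Product_Lexorder"
begin

text \<open>Concrete model: the pair (i,j) with 0 <= i < 2n, 0 <= j < 3 stands for a^i b^j.
  Since b^j a^k = a^k b^(j (-1)^k), we get
  (a^i b^j)(a^k b^l) = a^(i+k) b^(j (-1)^k + l), and -j = 2j mod 3.\<close>

definition U6n :: "nat \<Rightarrow> (nat \<times> nat) monoid" where
  "U6n n = \<lparr> carrier = {0..<2*n} \<times> {0..<3},
             mult = (\<lambda>(i,j) (k,l). ((i + k) mod (2*n),
                                    ((if even k then j else 2*j) + l) mod 3)),
             one = (0, 0) \<rparr>"

definition group_center :: "('a, 'b) monoid_scheme \<Rightarrow> 'a set" where
  "group_center G = {z \<in> carrier G. \<forall>g \<in> carrier G. z \<otimes>\<^bsub>G\<^esub> g = g \<otimes>\<^bsub>G\<^esub> z}"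

definition nc_vertices :: "('a, 'b) monoid_scheme \<Rightarrow> 'a set" where
  "nc_vertices G = carrier G - group_center G"

definition nc_adj :: "('a, 'b) monoid_scheme \<Rightarrow> 'a \<Rightarrow> 'a \<Rightarrow> bool" where
  "nc_adj G u v \<longleftrightarrow> u \<in> nc_vertices G \<and> v \<in> nc_vertices G \<and> u \<noteq> v \<and>
                     u \<otimes>\<^bsub>G\<^esub> v \<noteq> v \<otimes>\<^bsub>G\<^esub> u"

definition is_walk :: "('a \<Rightarrow> 'a \<Rightarrow> bool) \<Rightarrow> 'a list \<Rightarrow> bool" where
  "is_walk E xs \<longleftrightarrow> xs \<noteq> [] \<and> (\<forall>i. Suc i < length xs \<longrightarrow> E (xs ! i) (xs ! Suc i))"

text \<open>Length of a shortest path (= shortest walk) from u to v; meaningful for connected graphs.\<close>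
definition graph_dist :: "('a \<Rightarrow> 'a \<Rightarrow> bool) \<Rightarrow> 'a \<Rightarrow> 'a \<Rightarrow> nat" where
  "graph_dist E u v = (LEAST k. \<exists>xs. is_walk E xs \<and> hd xs = u \<and> last xs = v \<and> length xs = Suc k)"

definition transmission :: "'a set \<Rightarrow> ('a \<Rightarrow> 'a \<Rightarrow> bool) \<Rightarrow> 'a \<Rightarrow> nat" where
  "transmission V E v = (\<Sum>u\<in>V. graph_dist E u v)"

definition dist_signless_laplacian :: "'a set \<Rightarrow> ('a \<Rightarrow> 'a \<Rightarrow> bool) \<Rightarrow> 'a \<Rightarrow> 'a \<Rightarrow> real" where
  "dist_signless_laplacian V E u v =
     (if u = v then real (transmission V E v) else 0) + real (graph_dist E u v)"

text \<open>The matrix w.r.t. an enumeration of the (finite, linearly ordered) vertex set.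
  The characteristic polynomial does not depend on the chosen enumeration.\<close>
definition DQ_matrix :: "'a::linorder set \<Rightarrow> ('a \<Rightarrow> 'a \<Rightarrow> bool) \<Rightarrow> real mat" where
  "DQ_matrix V E = (let vs = sorted_list_of_set V in
     mat (length vs) (length vs) (\<lambda>(i, j). dist_signless_laplacian V E (vs ! i) (vs ! j)))"

end

theory Submission
  imports Defs
begin

definition Vn :: "nat \<Rightarrow> (nat\<times>nat) set" where
  "Vn n = {(i,j). i<2*n \<and> j<3 \<and> \<not>(even i \<and> j=0)}"

fun pt :: "nat\<times>nat \<Rightarrow> nat" where "pt (i,j) = (if even i then 0 else Suc j)"

lemma three_cases: "(j::nat) < 3 \<Longrightarrow> j=0 \<or> j=1 \<or> j=2" by auto

lemma U_carrier: "carrier (U6n n) = {0..<2*n}\<times>{0..<3}" by (simp add: U6n_def)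
lemma U_mult: "(i,j) \<otimes>\<^bsub>U6n n\<^esub> (k,l) = ((i+k) mod (2*n), ((if even k then j else 2*j)+l) mod 3)"
  by (simp add: U6n_def)

lemma comm_iff: assumes "j<3" "l<3"
  shows "((i,j) \<otimes>\<^bsub>U6n n\<^esub> (k,l) = (k,l) \<otimes>\<^bsub>U6n n\<^esub> (i,j)) \<longleftrightarrow>
    (if even i then (if even k then True else j=0) else (if even k then l=0 else j=l))"
  using three_cases[OF assms(1)] three_cases[OF assms(2)] by (auto simp: U_mult add.commute)

lemma center: assumes "n\<ge>1"
  shows "group_center (U6n n) = {(i,j). i<2*n \<and> j = 0 \<and> even i}"
proof -
  have c1: "(1,0) \<in> carrier (U6n n)" "(0,1) \<in> carrier (U6n n)" using assms by (auto simp: U_carrier)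
  have A: "z \<in> {(i,j). i<2*n \<and> j = 0 \<and> even i}" if h: "z \<in> group_center (U6n n)" for z
  proof -
    obtain i j where z: "z=(i,j)" by fastforce
    from h have cz: "i<2*n" "j<3" by (auto simp: group_center_def U_carrier z)
    from h c1 have e1: "(i,j) \<otimes>\<^bsub>U6n n\<^esub> (1,0) = (1,0) \<otimes>\<^bsub>U6n n\<^esub> (i,j)"
      and e2: "(i,j) \<otimes>\<^bsub>U6n n\<^esub> (0,1) = (0,1) \<otimes>\<^bsub>U6n n\<^esub> (i,j)"
      unfolding group_center_def z by blast+
    have j0: "j = 0"
      using comm_iff[where j=j and l=0 and i=i and n=n and k=1, OF cz(2)] e1 by (cases "even i") simp_all
    have ei: "even i"
      using comm_iff[where j=j and l=1 and i=i and n=n and k=0, OF cz(2)] e2 by (cases "even i") simp_all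
    show ?thesis using j0 ei cz z by simp
  qed
  have B: "z \<in> group_center (U6n n)" if h: "z \<in> {(i,j). i<2*n \<and> j = 0 \<and> even i}" for z
  proof -
    obtain i where z: "z=(i,0)" "i<2*n" "even i" using h by auto
    have "(i,0) \<otimes>\<^bsub>U6n n\<^esub> (k,l) = (k,l) \<otimes>\<^bsub>U6n n\<^esub> (i,0)" if "l<3" for k l
      using comm_iff[where j=0 and l=l and i=i and n=n and k=k] that z(3) by simp
    note cm = this
    have "\<forall>g\<in>carrier (U6n n). z \<otimes>\<^bsub>U6n n\<^esub> g = g \<otimes>\<^bsub>U6n n\<^esub> z"
    proof
      fix g assume "g \<in> carrier (U6n n)"
      then obtain k l where g: "g = (k,l)" "l<3" unfolding U_carrier by auto
      show "z \<otimes>\<^bsub>U6n n\<^esub> g = g \<otimes>\<^bsub>U6n n\<^esub> z" unfolding g(1) z(1) by (rule cm[OF g(2)])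
    qed
    moreover have "z \<in> carrier (U6n n)" using z unfolding U_carrier by simp
    ultimately show ?thesis unfolding group_center_def by blast
  qed
  show ?thesis using A B by blast
qed

lemma verts: assumes "n\<ge>1" shows "nc_vertices (U6n n) = Vn n"
  unfolding nc_vertices_def center[OF assms] U_carrier Vn_def
  by auto

lemma adj: assumes "n\<ge>1"
  shows "nc_adj (U6n n) u v \<longleftrightarrow> u \<in> Vn n \<and> v \<in> Vn n \<and> pt u \<noteq> pt v"
proof (cases "u \<in> Vn n \<and> v \<in> Vn n")
  case True
  obtain i j k l where uv: "u=(i,j)" "v=(k,l)" by fastforce
  have jl: "j<3" "l<3" "\<not>(even i \<and> j=0)" "\<not>(even k \<and> l=0)" using True by (auto simp: Vn_def uv)
  have c: "(u \<otimes>\<^bsub>U6n n\<^esub> v = v \<otimes>\<^bsub>U6n n\<^esub> u) \<longleftrightarrow> (if even i then (if even k then True else j=0) else (if even k then l=0 else j=l))"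
    unfolding uv by (rule comm_iff[OF jl(1,2)])
  have e: "nc_adj (U6n n) u v \<longleftrightarrow> u \<noteq> v \<and> \<not> (if even i then (if even k then True else j=0) else (if even k then l=0 else j=l))"
    unfolding nc_adj_def verts[OF assms] c[symmetric] using True by blast
  have p: "pt u = (if even i then 0 else Suc j)" "pt v = (if even k then 0 else Suc l)" by (simp_all add: uv)
  have ik: "even i \<noteq> even k \<Longrightarrow> u \<noteq> v" by (auto simp: uv)
  have jl2: "(u \<noteq> v \<and> j \<noteq> l) \<longleftrightarrow> j \<noteq> l" by (auto simp: uv)
  show ?thesis unfolding e p using jl True ik jl2 by (cases "even i"; cases "even k") simp_all
next
  case False then show ?thesis by (auto simp: nc_adj_def verts[OF assms])
qed


lemma walk_dist:
  assumes "is_walk E xs" "hd xs = u" "last xs = v" "length xs = Suc k"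
    "\<And>ys. is_walk E ys \<Longrightarrow> hd ys = u \<Longrightarrow> last ys = v \<Longrightarrow> length ys \<ge> Suc k"
  shows "graph_dist E u v = k"
  unfolding graph_dist_def
proof (rule Least_equality)
  show "\<exists>xs. is_walk E xs \<and> hd xs = u \<and> last xs = v \<and> length xs = Suc k" using assms(1-4) by blast
next
  fix y assume "\<exists>xs. is_walk E xs \<and> hd xs = u \<and> last xs = v \<and> length xs = Suc y"
  then obtain ys where "is_walk E ys" "hd ys = u" "last ys = v" "length ys = Suc y" by blast
  with assms(5)[of ys] show "k \<le> y" by simp
qed

lemma short_walk:
  assumes "is_walk E ys" "hd ys = u" "last ys = v" "length ys \<le> 2"
  shows "u = v \<or> E u v"
proof -
  have ne: "ys \<noteq> []" using assms(1) by (simp add: is_walk_def)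
  show ?thesis
  proof (cases "length ys = 1")
    case True then obtain a where "ys = [a]" by (cases ys) auto
    then show ?thesis using assms by simp
  next
    case False
    from ne have "length ys > 0" by simp
    then have "length ys = 2" using False assms(4) by linarith
    then obtain a b where ab: "ys = [a,b]"
      by (metis One_nat_def Suc_1 length_0_conv length_Suc_conv)
    have "\<forall>i. Suc i < length ys \<longrightarrow> E (ys!i) (ys!Suc i)" using assms(1) is_walk_def by blast
    then have "E (ys!0) (ys!Suc 0)" using \<open>length ys = 2\<close> by simp
    then have "E a b" using ab by simp
    then show ?thesis using assms ab by simp
  qed
qed

lemma walk1: "is_walk E [u]" by (simp add: is_walk_def)
lemma walk2: "E u v \<Longrightarrow> is_walk E [u,v]" by (simp add: is_walk_def)
lemma walk3: "E u c \<Longrightarrow> E c v \<Longrightarrow> is_walk E [u,c,v]"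
proof -
  assume a: "E u c" "E c v"
  have "E ([u,c,v] ! i) ([u,c,v] ! Suc i)" if "Suc i < 3" for i
  proof -
    have "i = 0 \<or> i = 1" using that by auto
    then show ?thesis using a by auto
  qed
  then show ?thesis unfolding is_walk_def by simp
qed

definition dst :: "nat\<times>nat \<Rightarrow> nat\<times>nat \<Rightarrow> nat" where
  "dst u v = (if u = v then 0 else if pt u = pt v then 2 else 1)"

lemma gdist: assumes n: "n\<ge>1" and uv: "u \<in> Vn n" "v \<in> Vn n"
  shows "graph_dist (nc_adj (U6n n)) u v = dst u v"
proof -
  let ?E = "nc_adj (U6n n)"
  have nw: "length ys \<ge> Suc 0" if "is_walk ?E ys" for ys using that by (cases ys) (auto simp: is_walk_def)
  show ?thesis
  proof (cases "u = v")
    case True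
    have "graph_dist ?E u v = 0"
      by (rule walk_dist[of _ "[u]"], rule walk1, simp, simp add: True, simp, rule nw)
    then show ?thesis by (simp add: dst_def True)
  next
    case neq: False
    show ?thesis
    proof (cases "pt u = pt v")
      case False
      have E: "?E u v" using adj[OF n] uv False by simp
      have lb: "Suc 1 \<le> length ys" if ys: "is_walk ?E ys" "hd ys = u" "last ys = v" for ys
      proof -
        have "length ys \<noteq> 1"
        proof
          assume "length ys = 1"
          then obtain a where "ys = [a]" by (cases ys) auto
          then show False using ys neq by simp
        qed
        then show ?thesis using nw[OF ys(1)] by simp
      qed
      have "graph_dist ?E u v = 1"
        apply (rule walk_dist[of _ "[u,v]"])
        apply (rule walk2[where E="nc_adj (U6n n)", OF E])
        apply simp apply simp apply simp
        by (rule lb)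
      then show ?thesis by (simp add: dst_def False neq)
    next
      case True
      define c where "c = (if pt u = 0 then (1::nat,0::nat) else (0,1))"
      have cV: "c \<in> Vn n" and pc: "pt c \<noteq> pt u" using n by (auto simp: c_def Vn_def)
      have E1: "?E u c" "?E c v" using adj[OF n] uv cV pc True by auto
      have notE: "\<not> ?E u v" using adj[OF n] True by simp
      have lb: "Suc 2 \<le> length ys" if ys: "is_walk ?E ys" "hd ys = u" "last ys = v" for ys
      proof -
        have "\<not> length ys \<le> 2" using short_walk[OF ys] neq notE by blast
        then show ?thesis by simp
      qed
      have "graph_dist ?E u v = 2"
        apply (rule walk_dist[of _ "[u,c,v]"])
        apply (rule walk3[where E="nc_adj (U6n n)", OF E1])
        apply simp apply simp apply simp
        by (rule lb)
      then show ?thesis by (simp add: dst_def True neq)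
    qed
  qed
qed



definition msz :: "nat \<Rightarrow> nat \<Rightarrow> nat" where "msz n p = (if p = 0 then 2*n else n)"

lemma finV: "finite (Vn n)"
proof -
  have "Vn n \<subseteq> {..<2*n} \<times> {..<3}" by (auto simp: Vn_def)
  then show ?thesis by (rule finite_subset) auto
qed

lemma ptV: "w \<in> Vn n \<Longrightarrow> pt w < 4"
  by (cases w) (auto simp: Vn_def)

lemma card_even: "card {i::nat. i<2*n \<and> even i} = n"
proof -
  have "{i::nat. i<2*n \<and> even i} = (\<lambda>k. 2*k) ` {..<n}" by (auto elim!: evenE)
  then show ?thesis by (simp add: card_image inj_on_def)
qed

lemma card_odd: "card {i::nat. i<2*n \<and> odd i} = n"
proof -
  have "{i::nat. i<2*n \<and> odd i} = (\<lambda>k. 2*k+1) ` {..<n}" by (auto elim!: oddE)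
  then show ?thesis by (simp add: card_image inj_on_def)
qed

lemma card_part: assumes "p < 4" shows "card {w \<in> Vn n. pt w = p} = msz n p"
proof (cases p)
  case 0
  have "{w \<in> Vn n. pt w = p} = {i. i<2*n \<and> even i} \<times> {1,2}"
    unfolding Vn_def 0 by (auto split: if_splits)
  then show ?thesis by (simp add: card_cartesian_product card_even msz_def 0)
next
  case (Suc j)
  with assms have j: "j < 3" by simp
  have "{w \<in> Vn n. pt w = p} = {i. i<2*n \<and> odd i} \<times> {j}"
    unfolding Vn_def Suc using j by (auto split: if_splits)
  then show ?thesis by (simp add: card_cartesian_product card_odd msz_def Suc)
qed

lemma sum_pt: "(\<Sum>w\<in>Vn n. h (pt w)) = (\<Sum>p<4. real (msz n p) * h p)"
proof -
  have "(\<Sum>w\<in>Vn n. h (pt w)) = (\<Sum>p<4. \<Sum>w\<in>{x\<in>Vn n. pt x = p}. h (pt w))"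
    apply (rule sum.group[symmetric]) apply (rule finV) apply simp using ptV by blast
  also have "\<dots> = (\<Sum>p<4. real (msz n p) * h p)"
  proof (rule sum.cong)
    fix p assume "p \<in> {..<4::nat}"
    then have "(\<Sum>w\<in>{x\<in>Vn n. pt x = p}. h (pt w)) = (\<Sum>w\<in>{x\<in>Vn n. pt x = p}. h p)" by simp
    also have "\<dots> = real (msz n p) * h p" using card_part \<open>p \<in> {..<4}\<close> by simp
    finally show "(\<Sum>w\<in>{x\<in>Vn n. pt x = p}. h (pt w)) = real (msz n p) * h p" .
  qed simp
  finally show ?thesis .
qed

lemma sum4: "(\<Sum>p<(4::nat). f p) = f 0 + f 1 + f 2 + (f 3 :: real)"
  by (simp add: eval_nat_numeral)

lemma trans_formula: assumes n: "n \<ge> 1" and v: "v \<in> Vn n"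
  shows "real (transmission (Vn n) (nc_adj (U6n n)) v) = real (5*n + msz n (pt v)) - 2"
proof -
  have "real (transmission (Vn n) (nc_adj (U6n n)) v) = (\<Sum>u\<in>Vn n. real (dst u v))"
    unfolding transmission_def using gdist[OF n _ v] by simp
  also have "\<dots> = (\<Sum>u\<in>Vn n. (1 + (if pt u = pt v then 1 else 0)) - (if u = v then 2 else 0))"
    by (rule sum.cong) (auto simp: dst_def)
  also have "\<dots> = (\<Sum>u\<in>Vn n. 1 + (if pt u = pt v then 1 else 0)) - 2"
    by (simp add: sum_subtractf finV v)
  also have "(\<Sum>u\<in>Vn n. 1 + (if pt u = pt v then 1 else 0)) = (\<Sum>p<4. real (msz n p) * (1 + (if p = pt v then 1 else 0)))"
    by (rule sum_pt)
  also have "\<dots> = real (5*n + msz n (pt v))"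
    using ptV[OF v] by (auto simp: sum4 msz_def less_Suc_eq numeral_eq_Suc)
  finally show ?thesis .
qed



definition fv :: "nat \<Rightarrow> nat\<times>nat" where "fv p = (if p = 0 then (0,1) else (1, p-1))"
definition isf :: "nat\<times>nat \<Rightarrow> bool" where "isf x \<longleftrightarrow> x = fv (pt x)"

definition Wm :: "nat \<Rightarrow> nat \<Rightarrow> real" where
  "Wm p q = [[3,1,0,0],[2,-1,1,1],[2,-1,-1,0],[2,-1,0,-1]] ! p ! q"
definition Wi :: "nat \<Rightarrow> nat \<Rightarrow> real" where
  "Wi q p = [[1/5,1/15,1/15,1/15],[2/5,-1/5,-1/5,-1/5],[0,1/3,-2/3,1/3],[0,1/3,1/3,-2/3]] ! q ! p"
definition mu :: "nat \<Rightarrow> nat \<Rightarrow> real" where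
  "mu n q = [13 * real n - 4, 8 * real n - 4, 7 * real n - 4, 7 * real n - 4] ! q"
definition dd :: "nat \<Rightarrow> nat \<Rightarrow> real" where
  "dd n p = real (5*n + msz n p) - 4"

definition pv :: "nat\<times>nat \<Rightarrow> nat\<times>nat \<Rightarrow> real" where
  "pv w y = (if isf y then Wm (pt w) (pt y) else (if w = y then 1 else 0) - (if w = fv (pt y) then 1 else 0))"
definition qv :: "nat \<Rightarrow> nat\<times>nat \<Rightarrow> nat\<times>nat \<Rightarrow> real" where
  "qv n x z = (if isf x then Wi (pt x) (pt z) / real (msz n (pt z))
     else (if z = x then 1 else 0) - (if pt z = pt x then 1 / real (msz n (pt x)) else 0))"
definition lam :: "nat \<Rightarrow> nat\<times>nat \<Rightarrow> real" where
  "lam n y = (if isf y then mu n (pt y) else dd n (pt y))"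
definition Fv :: "nat \<Rightarrow> nat\<times>nat \<Rightarrow> nat\<times>nat \<Rightarrow> real" where
  "Fv n x w = (if w = x then dd n (pt x) else 0) + 1 + (if pt w = pt x then 1 else 0)"

lemma cases4: "(p::nat) < 4 \<Longrightarrow> p = 0 \<or> p = 1 \<or> p = 2 \<or> p = 3" by auto

lemma fvV: "n \<ge> 1 \<Longrightarrow> p < 4 \<Longrightarrow> fv p \<in> Vn n"
  using cases4[of p] by (auto simp: fv_def Vn_def)
lemma pt_fv: "p < 4 \<Longrightarrow> pt (fv p) = p"
  using cases4[of p] by (auto simp: fv_def)
lemma isf_fv: "p < 4 \<Longrightarrow> isf (fv p)"
  by (simp add: isf_def pt_fv)
lemma isf_eq: "isf x \<Longrightarrow> isf y \<Longrightarrow> x = y \<longleftrightarrow> pt x = pt y"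
  by (metis isf_def)
lemma msz_pos: "n \<ge> 1 \<Longrightarrow> real (msz n p) > 0" by (simp add: msz_def)

lemma SUMLEM: assumes "a \<in> Vn n" "b \<in> Vn n"
  shows "(\<Sum>w\<in>Vn n. h (pt w) + (if w = a then c1 else 0) + (if w = b then c2 else 0))
     = (\<Sum>p<4. real (msz n p) * h p) + c1 + (c2::real)"
  using assms by (simp add: sum.distrib sum_pt finV sum.delta')

lemma WiWm: "p < 4 \<Longrightarrow> q < 4 \<Longrightarrow> (\<Sum>r<4. Wi p r * Wm r q) = (if p = q then 1 else 0)"
  using cases4[of p] cases4[of q] by (auto simp: sum4 Wi_def Wm_def)

lemma Weig: "p < 4 \<Longrightarrow> q < 4 \<Longrightarrow>
   dd n p * Wm p q + (\<Sum>r<4. real (msz n r) * ((1 + (if r = p then 1 else 0)) * Wm r q)) = mu n q * Wm p q"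
  using cases4[of p] cases4[of q] by (auto simp: sum4 Wm_def mu_def dd_def msz_def algebra_simps)



lemma QP: assumes n: "n \<ge> 1" and x: "x \<in> Vn n" and y: "y \<in> Vn n"
  shows "(\<Sum>w\<in>Vn n. qv n x w * pv w y) = (if x = y then 1 else 0)"
proof -
  have px: "pt x < 4" and py: "pt y < 4" using ptV x y by auto
  have fy: "fv (pt y) \<in> Vn n" using fvV[OF n py] .
  have pfy: "pt (fv (pt y)) = pt y" using pt_fv[OF py] .
  show ?thesis
  proof (cases "isf x")
    case fx: True
    show ?thesis
    proof (cases "isf y")
      case fyy: True
      have "(\<Sum>w\<in>Vn n. qv n x w * pv w y) = (\<Sum>w\<in>Vn n. (\<lambda>p. Wi (pt x) p / real (msz n p) * Wm p (pt y)) (pt w))"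
        by (rule sum.cong) (auto simp: qv_def pv_def fx fyy)
      also have "\<dots> = (\<Sum>p<4. Wi (pt x) p * Wm p (pt y))"
        apply (subst sum_pt[where h="\<lambda>p. Wi (pt x) p / real (msz n p) * Wm p (pt y)"])
        using msz_pos[OF n] by (intro sum.cong) (auto simp: field_simps)
      also have "\<dots> = (if x = y then 1 else 0)" using WiWm[OF px py] isf_eq[OF fx fyy] by simp
      finally show ?thesis .
    next
      case nfy: False
      let ?c = "Wi (pt x) (pt y) / real (msz n (pt y))"
      have "(\<Sum>w\<in>Vn n. qv n x w * pv w y) = (\<Sum>w\<in>Vn n. (\<lambda>p. 0) (pt w) + (if w = y then ?c else 0) + (if w = fv (pt y) then - ?c else 0))"
        by (rule sum.cong) (auto simp: qv_def pv_def fx nfy pfy)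
      also have "\<dots> = 0" by (subst SUMLEM[OF y fy]) simp
      finally show ?thesis using fx nfy by auto
    qed
  next
    case nfx: False
    show ?thesis
    proof (cases "isf y")
      case fyy: True
      have "(\<Sum>w\<in>Vn n. qv n x w * pv w y) = (\<Sum>w\<in>Vn n. (\<lambda>p. - (if p = pt x then 1 / real (msz n (pt x)) else 0) * Wm p (pt y)) (pt w)
           + (if w = x then Wm (pt x) (pt y) else 0) + (if w = x then 0 else 0))"
        by (rule sum.cong) (auto simp: qv_def pv_def nfx fyy algebra_simps)
      also have "\<dots> = 0"
        using msz_pos[OF n, of "pt x"] px
        by (subst SUMLEM[OF x x]) (auto simp: sum4 dest!: cases4)
      finally show ?thesis using nfx fyy by auto
    next
      case nfy: False
      have xf: "x \<noteq> fv (pt y)" using nfx pfy isf_def by metis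
      let ?c = "(if pt y = pt x then 1 / real (msz n (pt x)) else 0)"
      have "(\<Sum>w\<in>Vn n. qv n x w * pv w y) = (\<Sum>w\<in>Vn n. (\<lambda>p. 0) (pt w)
           + (if w = y then (if x = y then 1 else 0) - ?c else 0) + (if w = fv (pt y) then ?c else 0))"
        by (rule sum.cong) (use xf in \<open>auto simp: qv_def pv_def nfx nfy pfy\<close>)
      also have "\<dots> = (if x = y then 1 else 0)" by (subst SUMLEM[OF y fy]) simp
      finally show ?thesis .
    qed
  qed
qed

lemma MP: assumes n: "n \<ge> 1" and x: "x \<in> Vn n" and y: "y \<in> Vn n"
  shows "(\<Sum>w\<in>Vn n. Fv n x w * pv w y) = pv x y * lam n y"
proof -
  have px: "pt x < 4" and py: "pt y < 4" using ptV x y by auto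
  have fy: "fv (pt y) \<in> Vn n" using fvV[OF n py] .
  have pfy: "pt (fv (pt y)) = pt y" using pt_fv[OF py] .
  show ?thesis
  proof (cases "isf y")
    case fyy: True
    have "(\<Sum>w\<in>Vn n. Fv n x w * pv w y) = (\<Sum>w\<in>Vn n. (\<lambda>p. (1 + (if p = pt x then 1 else 0)) * Wm p (pt y)) (pt w)
         + (if w = x then dd n (pt x) * Wm (pt x) (pt y) else 0) + (if w = x then 0 else 0))"
      by (rule sum.cong) (auto simp: Fv_def pv_def fyy algebra_simps)
    also have "\<dots> = mu n (pt y) * Wm (pt x) (pt y)"
      by (subst SUMLEM[OF x x]) (use Weig[OF px py, of n] in simp)
    finally show ?thesis by (simp add: pv_def lam_def fyy)
  next
    case nfy: False
    have "(\<Sum>w\<in>Vn n. Fv n x w * pv w y) = (\<Sum>w\<in>Vn n. (\<lambda>p. 0) (pt w)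
         + (if w = y then Fv n x y else 0) + (if w = fv (pt y) then - Fv n x (fv (pt y)) else 0))"
      by (rule sum.cong) (auto simp: pv_def nfy)
    also have "\<dots> = Fv n x y - Fv n x (fv (pt y))" by (subst SUMLEM[OF y fy]) simp
    also have "\<dots> = pv x y * lam n y"
      by (auto simp: Fv_def pv_def lam_def nfy pfy)
    finally show ?thesis .
  qed
qed



lemma mat_mult_vs: assumes d: "distinct vs"
  shows "mat (length vs) (length vs) (\<lambda>(i,j). a (vs!i) (vs!j)) * mat (length vs) (length vs) (\<lambda>(i,j). b (vs!i) (vs!j))
       = mat (length vs) (length vs) (\<lambda>(i,j). \<Sum>w\<in>set vs. a (vs!i) w * (b w (vs!j) :: 'a :: comm_ring_1))"
proof (rule eq_matI)
  fix i j assume ij: "i < dim_row (mat (length vs) (length vs) (\<lambda>(i,j). \<Sum>w\<in>set vs. a (vs!i) w * b w (vs!j)))"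
    "j < dim_col (mat (length vs) (length vs) (\<lambda>(i,j). \<Sum>w\<in>set vs. a (vs!i) w * b w (vs!j)))"
  have inj: "inj_on (nth vs) {0..<length vs}" using d by (simp add: inj_on_nth)
  have "set vs = set (map (nth vs) [0..<length vs])" by (simp only: map_nth)
  then have st: "set vs = nth vs ` {0..<length vs}" by (simp only: set_map set_upt)
  have "(\<Sum>w\<in>set vs. a (vs!i) w * b w (vs!j)) = (\<Sum>k\<in>{0..<length vs}. a (vs!i) (vs!k) * b (vs!k) (vs!j))"
    unfolding st by (subst sum.reindex[OF inj]) simp
  then show "(mat (length vs) (length vs) (\<lambda>(i,j). a (vs!i) (vs!j)) * mat (length vs) (length vs) (\<lambda>(i,j). b (vs!i) (vs!j))) $$ (i, j) =
         mat (length vs) (length vs) (\<lambda>(i,j). \<Sum>w\<in>set vs. a (vs!i) w * b w (vs!j)) $$ (i, j)"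
    using ij by (simp add: scalar_prod_def)
qed auto

lemma sum_diag: assumes "finite V" "y \<in> V"
  shows "(\<Sum>w\<in>V. p w * (if w = y then c else 0)) = p y * (c::real)"
proof -
  have "(\<Sum>w\<in>V. p w * (if w = y then c else 0)) = (\<Sum>w\<in>V. if w = y then p y * c else 0)"
    by (rule sum.cong) auto
  then show ?thesis using assms by (simp add: sum.delta')
qed

lemma dsl: assumes n: "n \<ge> 1" and x: "x \<in> Vn n" and w: "w \<in> Vn n"
  shows "dist_signless_laplacian (Vn n) (nc_adj (U6n n)) x w = Fv n x w"
  unfolding dist_signless_laplacian_def Fv_def gdist[OF n x w] trans_formula[OF n w]
  by (auto simp: dst_def dd_def)



lemma prod4: "(\<Prod>p<(4::nat). f p) = f 0 * f 1 * f 2 * (f 3 :: 'a :: comm_monoid_mult)"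
  by (simp add: eval_nat_numeral)

lemma PRODF: assumes n: "n \<ge> 1"
  shows "(\<Prod>x\<in>Vn n. [:- lam n x, 1:]) =
           [:- (6 * real n - 4), 1:] ^ (3 * (n - 1))
         * [:- (7 * real n - 4), 1:] ^ (2 * n + 1)
         * [:- (8 * real n - 4), 1:]
         * [:- (13 * real n - 4), 1:]"
proof -
  let ?g = "\<lambda>a::real. [:- a, 1:]"
  define Fs where "Fs = fv ` {..<4}"
  have FsV: "Fs \<subseteq> Vn n" using fvV[OF n] by (auto simp: Fs_def)
  have injf: "inj_on fv {..<4}" by (metis inj_onI lessThan_iff pt_fv)
  have "(\<Prod>x\<in>Vn n. ?g (lam n x)) = (\<Prod>x\<in>Vn n - Fs. ?g (lam n x)) * (\<Prod>x\<in>Fs. ?g (lam n x))"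
    by (rule prod.subset_diff[OF FsV finV])
  also have "(\<Prod>x\<in>Fs. ?g (lam n x)) = (\<Prod>p<4. ?g (lam n (fv p)))"
    unfolding Fs_def by (subst prod.reindex[OF injf]) simp
  also have "\<dots> = (\<Prod>p<4. ?g (mu n p))"
    by (rule prod.cong) (auto simp: lam_def isf_fv pt_fv)
  also have "(\<Prod>x\<in>Vn n - Fs. ?g (lam n x)) = (\<Prod>x\<in>Vn n - Fs. ?g (dd n (pt x)))"
  proof (rule prod.cong)
    fix x assume "x \<in> Vn n - Fs"
    then have "\<not> isf x" unfolding isf_def Fs_def using ptV by blast
    then show "?g (lam n x) = ?g (dd n (pt x))" by (simp add: lam_def)
  qed simp
  also have "\<dots> = (\<Prod>p<4. \<Prod>x\<in>{x \<in> Vn n - Fs. pt x = p}. ?g (dd n (pt x)))"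
    apply (rule prod.group[symmetric]) using finV apply simp apply simp using ptV by blast
  also have "\<dots> = (\<Prod>p<4. ?g (dd n p) ^ (msz n p - 1))"
  proof (rule prod.cong)
    fix p assume p: "p \<in> {..<4::nat}"
    have "{x \<in> Vn n - Fs. pt x = p} = {x \<in> Vn n. pt x = p} - {fv p}"
    proof -
      have "x \<in> Fs \<longleftrightarrow> x = fv p" if "pt x = p" for x
        using that p pt_fv unfolding Fs_def by force
      then show ?thesis by blast
    qed
    moreover have "fv p \<in> {x \<in> Vn n. pt x = p}" using fvV[OF n] pt_fv p by auto
    ultimately have c: "card {x \<in> Vn n - Fs. pt x = p} = msz n p - 1"
      using card_part[of p n] p by (simp add: card_Diff_singleton)
    have "(\<Prod>x\<in>{x \<in> Vn n - Fs. pt x = p}. ?g (dd n (pt x))) = (\<Prod>x\<in>{x \<in> Vn n - Fs. pt x = p}. ?g (dd n p))"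
      by (rule prod.cong) auto
    also have "\<dots> = ?g (dd n p) ^ (msz n p - 1)" by (simp only: prod_constant c)
    finally show "(\<Prod>x\<in>{x \<in> Vn n - Fs. pt x = p}. ?g (dd n (pt x))) = ?g (dd n p) ^ (msz n p - 1)" .
  qed simp
  finally have L: "(\<Prod>x\<in>Vn n. ?g (lam n x)) = (\<Prod>p<4. ?g (dd n p) ^ (msz n p - 1)) * (\<Prod>p<4. ?g (mu n p))" .
  obtain k where k: "n = Suc k" using n by (cases n) auto
  have d: "dd n 0 = 7 * real n - 4" "dd n 1 = 6 * real n - 4" "dd n 2 = 6 * real n - 4" "dd n 3 = 6 * real n - 4"
    by (simp_all add: dd_def msz_def)
  have m: "msz n 0 - 1 = 2*k+1" "msz n 1 - 1 = k" "msz n 2 - 1 = k" "msz n 3 - 1 = k"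
    using k by (simp_all add: msz_def)
  have mus: "mu n 0 = 13 * real n - 4" "mu n 1 = 8 * real n - 4" "mu n 2 = 7 * real n - 4" "mu n 3 = 7 * real n - 4"
    by (simp_all add: mu_def)
  have L2: "(\<Prod>x\<in>Vn n. ?g (lam n x)) =
     (?g (7 * real n - 4) ^ (2*k+1) * ?g (6 * real n - 4) ^ k * ?g (6 * real n - 4) ^ k * ?g (6 * real n - 4) ^ k)
     * (?g (13 * real n - 4) * ?g (8 * real n - 4) * ?g (7 * real n - 4) * ?g (7 * real n - 4))"
    unfolding L prod4 d m mus by (rule refl)
  have alg: "(b^(2*k+1) * a^k * a^k * a^k) * (e * c * b * b) = a ^ (3 * (Suc k - 1)) * b ^ (2 * Suc k + 1) * c * e"
    for a b c e :: "real poly"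
  proof -
    have "a ^ (3 * (Suc k - 1)) = a^k * a^k * a^k" by (simp add: power_add numeral_3_eq_3)
    moreover have "b ^ (2 * Suc k + 1) = b^(2*k+1) * b * b" by (simp add: power_add)
    ultimately show ?thesis by (simp add: mult_ac)
  qed
  show ?thesis unfolding L2 alg k[symmetric] ..
qed


theorem theorem5p3:
  fixes n :: nat
  assumes "n \<ge> 1"
  shows "char_poly (DQ_matrix (nc_vertices (U6n n)) (nc_adj (U6n n))) =
           [:- (6 * real n - 4), 1:] ^ (3 * (n - 1))
         * [:- (7 * real n - 4), 1:] ^ (2 * n + 1)
         * [:- (8 * real n - 4), 1:]
         * [:- (13 * real n - 4), 1:]"
proof -
  note n = assms
  define vs where "vs = sorted_list_of_set (Vn n)"
  define N where "N = length vs"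
  have dvs: "distinct vs" and svs: "set vs = Vn n" using finV by (auto simp: vs_def)
  have inV: "i < N \<Longrightarrow> vs ! i \<in> Vn n" for i using svs unfolding N_def by (metis nth_mem)
  have nth_eq: "i < N \<Longrightarrow> j < N \<Longrightarrow> vs ! i = vs ! j \<longleftrightarrow> i = j" for i j
    using dvs unfolding N_def by (simp add: nth_eq_iff_index_eq)
  define M where "M = mat N N (\<lambda>(i,j). Fv n (vs!i) (vs!j))"
  define P where "P = mat N N (\<lambda>(i,j). pv (vs!i) (vs!j))"
  define Q where "Q = mat N N (\<lambda>(i,j). qv n (vs!i) (vs!j))"
  define tf where "tf = (\<lambda>x y. if x = y then lam n y else 0)"
  define T where "T = mat N N (\<lambda>(i,j). tf (vs!i) (vs!j))"
  have DQ: "DQ_matrix (nc_vertices (U6n n)) (nc_adj (U6n n)) = M"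
    unfolding DQ_matrix_def verts[OF n] Let_def M_def N_def[symmetric] vs_def[symmetric]
    by (rule eq_matI) (auto simp: N_def dsl[OF n] inV)
  have cM: "M \<in> carrier_mat N N" and cP: "P \<in> carrier_mat N N" and cQ: "Q \<in> carrier_mat N N"
    and cT: "T \<in> carrier_mat N N" by (simp_all add: M_def P_def Q_def T_def)
  have QP: "Q * P = 1\<^sub>m N"
    unfolding Q_def P_def N_def mat_mult_vs[OF dvs] svs
    by (rule eq_matI) (auto simp: QP[OF n] inV[unfolded N_def] nth_eq[unfolded N_def])
  have PQ: "P * Q = 1\<^sub>m N" by (rule mat_mult_left_right_inverse[OF cQ cP QP])
  define R where "R = mat N N (\<lambda>(i,j). pv (vs!i) (vs!j) * lam n (vs!j))"
  have MP: "M * P = R"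
    unfolding M_def P_def R_def N_def mat_mult_vs[OF dvs] svs
    by (rule eq_matI) (auto simp: MP[OF n] inV[unfolded N_def])
  have PT: "P * T = R"
    unfolding T_def P_def R_def N_def mat_mult_vs[OF dvs] svs
    by (rule eq_matI) (auto simp: tf_def sum_diag[OF finV] inV[unfolded N_def])
  have "M = M * (P * Q)" using cM by (simp add: PQ)
  also have "\<dots> = (M * P) * Q" using cM cP cQ by (simp add: assoc_mult_mat)
  also have "\<dots> = P * T * Q" by (simp add: MP PT)
  finally have MPTQ: "M = P * T * Q" .
  have sim: "similar_mat M T"
    unfolding similar_mat_def similar_mat_wit_def Let_def
    using cM cP cQ cT PQ QP MPTQ by (intro exI[of _ P] exI[of _ Q]) auto
  have ut: "upper_triangular T"
    unfolding upper_triangular_def T_def tf_def using nth_eq by auto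
  have "char_poly M = char_poly T" by (rule char_poly_similar[OF sim])
  also have "\<dots> = (\<Prod>a\<leftarrow>diag_mat T. [:- a, 1:])" by (rule char_poly_upper_triangular[OF cT ut])
  also have "diag_mat T = map (lam n) vs"
    unfolding diag_mat_def T_def tf_def by (rule nth_equalityI) (auto simp: N_def)
  also have "(\<Prod>a\<leftarrow>map (lam n) vs. [:- a, 1:]) = (\<Prod>x\<in>Vn n. [:- lam n x, 1:])"
    unfolding svs[symmetric] by (simp add: prod.distinct_set_conv_list[OF dvs] comp_def)
  also have "\<dots> = [:- (6 * real n - 4), 1:] ^ (3 * (n - 1))
         * [:- (7 * real n - 4), 1:] ^ (2 * n + 1)
         * [:- (8 * real n - 4), 1:]
         * [:- (13 * real n - 4), 1:]" by (rule PRODF[OF n])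
  finally show ?thesis unfolding DQ .
qed


end
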